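(* Assume $Y=X\beta_\star+\epsilon$ with $\epsilon\sim N(0,\sigma_\star^2 I_n)$, where $\sigma_\star^2>0$. Assume $X\in\mathbb R^{n\times p}$ has nonzero, pairwise orthogonal columns, i.e. $\langle x_k,x_j\rangle=0$ for $j\neq k$. Take $\sigma^2=\sigma_\star^2$, and let $\hat\gamma_n$ be a maximizer of $\gamma\mapsto\ell(\sigma_\star^2,\gamma)$ over $[0,\infty)^p$ (computed from the data $Y$) satisfying the coordinatewise characterization below. Then for every $j\in\{1,\ldots,p\}$ with $\beta_{\star,j}=0$, \[\mathbb P\left[\hat\gamma_{n,j}=0\right]=\mathbb P\left[Z^2\le 1\right]\ (\approx 0.68),\] where $Z\sim N(0,1)$.
   Context: For $\gamma\in[0,\infty)^p$ let $I_\gamma=\{j:\gamma_j\neq0\}$ and $C_\gamma=\sigma^2 I_n+\sum_{j\in I_\gamma}\gamma_j x_jx_j'$. Define $\ell(\sigma^2,\gamma)=-\tfrac12\log\det(C_\gamma)-\tfrac12\operatorname{Tr}(C_\gamma^{-1}YY')$. Coordinatewise characterization required of $\hat\gamma_n$: for every $j$, with $C_j=\sigma^2 I_n+\sum_{k\in I_{\hat\gamma_n}\setminus\{j\}}\hat\gamma_{n,k}x_kx_k'$, one has $\hat\gamma_{n,j}=\big((x_j'C_j^{-1}Y)^2-x_j'C_j^{-1}x_j\big)/(x_j'C_j^{-1}x_j)^2$ if $(x_j'C_j^{-1}Y)^2>x_j'C_j^{-1}x_j$, and $\hat\gamma_{n,j}=0$ otherwise. In particular, $\hat\gamma_{n,j}=0$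 if and only if $(x_j'C_j^{-1}Y)^2\le x_j'C_j^{-1}x_j$. *)

theory Defs
  imports "HOL-Analysis.Analysis" "HOL-Probability.Probability"
begin

definition outer :: "real^'n \<Rightarrow> real^'n \<Rightarrow> real^'n^'n" where
  "outer x y = (\<chi> i k. x $ i * y $ k)"

definition supp_idx :: "real^'p \<Rightarrow> 'p set" where
  "supp_idx \<gamma> = {j. \<gamma> $ j \<noteq> 0}"

definition Cmat_on :: "real^'p^'n \<Rightarrow> real \<Rightarrow> real^'p \<Rightarrow> 'p set \<Rightarrow> real^'n^'n" where
  "Cmat_on X s2 \<gamma> S = s2 *\<^sub>R mat 1 + (\<Sum>k\<in>S. \<gamma> $ k *\<^sub>R outer (column k X) (column k X))"

definition Cmat :: "real^'p^'n \<Rightarrow> real \<Rightarrow> real^'p \<Rightarrow> real^'n^'n" where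
  "Cmat X s2 \<gamma> = Cmat_on X s2 \<gamma> (supp_idx \<gamma>)"

definition loglik :: "real^'p^'n \<Rightarrow> real^'n \<Rightarrow> real \<Rightarrow> real^'p \<Rightarrow> real" where
  "loglik X Y s2 \<gamma> = - (1/2) * ln (det (Cmat X s2 \<gamma>))
                      - (1/2) * trace (matrix_inv (Cmat X s2 \<gamma>) ** outer Y Y)"

definition coord_char :: "real^'p^'n \<Rightarrow> real^'n \<Rightarrow> real \<Rightarrow> real^'p \<Rightarrow> 'p \<Rightarrow> bool" where
  "coord_char X Y s2 g j =
     (let Cj = Cmat_on X s2 g (supp_idx g - {j});
          xj = column j X;
          a = xj \<bullet> (matrix_inv Cj *v Y);
          b = xj \<bullet> (matrix_inv Cj *v xj)
      in g $ j = (if a\<^sup>2 > b then (a\<^sup>2 - b) / b\<^sup>2 else 0))"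

definition gauss_noise :: "real \<Rightarrow> (real^'n) measure" where
  "gauss_noise s2 = density lborel (\<lambda>e. ennreal (\<Prod>i\<in>UNIV. normal_density 0 (sqrt s2) (e $ i)))"

definition std_normal :: "real measure" where
  "std_normal = density lborel (\<lambda>z. ennreal (std_normal_density z))"

end

theory Submission imports Defs begin
lemma if_add_same: "(if P then (a::real) + b else b) = (if P then a else 0) + b" by simp

lemma Cmat_on_mult:
  fixes X :: "real^'p^'n"
  assumes "finite S"
  shows "Cmat_on X s2 g S *v w = s2 *\<^sub>R w + (\<Sum>k\<in>S. (g $ k * (column k X \<bullet> w)) *\<^sub>R column k X)"
  unfolding Cmat_on_def
  apply (simp add: vec_eq_iff matrix_vector_mult_def outer_def mat_def sum_component inner_vec_def
        sum_distrib_left sum_distrib_right if_distrib if_distribR algebra_simps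
        cong del: if_weak_cong)
  apply (simp add: if_add_same sum.distrib  cong del: if_weak_cong)
  apply (subst sum.swap) apply simp
  done

lemma char_zero_iff:
  fixes X :: "real^'p^'n" and g :: "real^'p"
  assumes s2: "s2 > 0" and nz: "column j X \<noteq> 0"
    and orth: "\<And>k l. k \<noteq> l \<Longrightarrow> column k X \<bullet> column l X = 0"
    and nn: "\<And>k. g $ k \<ge> 0"
    and ch: "coord_char X Y s2 g j"
  shows "g $ j = 0 \<longleftrightarrow> (column j X \<bullet> Y)\<^sup>2 \<le> s2 * (column j X \<bullet> column j X)"
proof -
  define S where "S = supp_idx g - {j}"
  define Cj where "Cj = Cmat_on X s2 g S"
  define xj where "xj = column j X"
  define M where "M = matrix_inv Cj"
  have fin: "finite S" by simp
  have quad: "w \<bullet> (Cj *v w) = s2 * (w \<bullet> w) + (\<Sum>k\<in>S. g $ k * (column k X \<bullet> w)\<^sup>2)" for w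
    unfolding Cj_def Cmat_on_mult[OF fin]
    by (simp add: inner_add_right inner_sum_right power2_eq_square algebra_simps inner_commute)
  have xjC: "xj \<bullet> (Cj *v w) = s2 * (xj \<bullet> w)" for w
  proof -
    have "(\<Sum>k\<in>S. xj \<bullet> ((g $ k * (column k X \<bullet> w)) *\<^sub>R column k X)) = 0"
      by (rule sum.neutral) (auto simp: S_def xj_def orth inner_commute)
    then show ?thesis
      unfolding Cj_def Cmat_on_mult[OF fin]
      by (simp add: inner_add_right inner_sum_right)
  qed
  have ker: "Cj *v w = 0 \<Longrightarrow> w = 0" for w
  proof -
    assume "Cj *v w = 0"
    then have "0 = s2 * (w \<bullet> w) + (\<Sum>k\<in>S. g $ k * (column k X \<bullet> w)\<^sup>2)"
      using quad[of w] by simp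
    moreover have "(\<Sum>k\<in>S. g $ k * (column k X \<bullet> w)\<^sup>2) \<ge> 0"
      by (intro sum_nonneg mult_nonneg_nonneg nn) simp
    ultimately have "w \<bullet> w \<le> 0" using s2
      by (smt (verit) inner_ge_zero mult_pos_pos)
    then show "w = 0" by (metis inner_ge_zero inner_eq_zero_iff order_antisym)
  qed
  have inv: "invertible Cj"
    using ker by (simp add: invertible_left_inverse matrix_left_invertible_ker)
  have CM: "Cj *v (M *v v) = v" for v
  proof -
    have "Cj ** M = mat 1" using inv unfolding M_def invertible_def matrix_inv_def
      by (metis (mono_tags, lifting) someI_ex)
    then show ?thesis by (simp add: matrix_vector_mul_assoc)
  qed
  have a: "xj \<bullet> (M *v Y) = (xj \<bullet> Y) / s2"
    using xjC[of "M *v Y"] CM[of Y] s2 by (simp add: field_simps)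
  have b: "xj \<bullet> (M *v xj) = (xj \<bullet> xj) / s2"
    using xjC[of "M *v xj"] CM[of xj] s2 by (simp add: field_simps)
  have bpos: "xj \<bullet> xj > 0" using nz unfolding xj_def by simp
  have eq: "g $ j = (if (xj \<bullet> (M *v Y))\<^sup>2 > xj \<bullet> (M *v xj)
      then ((xj \<bullet> (M *v Y))\<^sup>2 - xj \<bullet> (M *v xj)) / (xj \<bullet> (M *v xj))\<^sup>2 else 0)"
    using ch unfolding coord_char_def Let_def M_def Cj_def S_def xj_def .
  have "(xj \<bullet> (M *v Y))\<^sup>2 \<le> xj \<bullet> (M *v xj) \<longleftrightarrow> (xj \<bullet> Y)\<^sup>2 \<le> s2 * (xj \<bullet> xj)"
    unfolding a b using s2 by (simp add: power_divide field_simps power2_eq_square)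
  moreover have "g $ j = 0 \<longleftrightarrow> (xj \<bullet> (M *v Y))\<^sup>2 \<le> xj \<bullet> (M *v xj)"
  proof -
    have bp: "xj \<bullet> (M *v xj) > 0" using b bpos s2 by simp
    show ?thesis
      by (subst eq, cases "(xj \<bullet> (M *v Y))\<^sup>2 > xj \<bullet> (M *v xj)") (use bp in auto)
  qed
  ultimately show ?thesis unfolding xj_def by simp
qed

lemma Basis_vec_real: "(Basis :: (real^'n) set) = range (\<lambda>i. axis i 1)"
  by (auto simp: Basis_vec_def)

lemma inj_axis1: "inj (\<lambda>i::'n::finite. axis i (1::real))"
  by (auto simp: inj_def axis_eq_axis)

lemma nn_integral_lborel_prod_vec:
  fixes f :: "'n::finite \<Rightarrow> real \<Rightarrow> ennreal"
  assumes [measurable]: "\<And>i. f i \<in> borel_measurable borel"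
  shows "(\<integral>\<^sup>+x. (\<Prod>i\<in>UNIV. f i (x$i)) \<partial>(lborel::(real^'n) measure)) = (\<Prod>i\<in>UNIV. \<integral>\<^sup>+x. f i x \<partial>lborel)"
proof -
  define idx where "idx b = (SOME i. b = axis i (1::real))" for b :: "real^'n"
  have idx: "idx (axis i 1) = i" for i
    unfolding idx_def by (rule some_equality) (auto simp: axis_eq_axis)
  define h where "h b = f (idx b)" for b
  have "(\<integral>\<^sup>+x. (\<Prod>b\<in>Basis. h b (x \<bullet> b)) \<partial>(lborel::(real^'n) measure)) = (\<Prod>b\<in>Basis. (\<integral>\<^sup>+x. h b x \<partial>lborel))"
    by (rule nn_integral_lborel_prod) (auto simp: h_def)
  moreover have "(\<Prod>b\<in>Basis. h b (x \<bullet> b)) = (\<Prod>i\<in>UNIV. f i (x$i))" for x :: "real^'n"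
    unfolding Basis_vec_real by (subst prod.reindex[OF inj_axis1]) (simp add: h_def idx inner_axis)
  moreover have "(\<Prod>b\<in>(Basis::(real^'n) set). (\<integral>\<^sup>+x. h b x \<partial>lborel)) = (\<Prod>i\<in>UNIV. \<integral>\<^sup>+x. f i x \<partial>lborel)"
    unfolding Basis_vec_real by (subst prod.reindex[OF inj_axis1]) (simp add: h_def idx)
  ultimately show ?thesis by simp
qed

definition "NN s2 = density lborel (\<lambda>t. ennreal (normal_density 0 (sqrt s2) t))"

lemma gauss_noise_proj:
  assumes s2: "s2 > 0"
  shows "distr (gauss_noise s2) (PiM UNIV (\<lambda>_::'n::finite. NN s2)) (\<lambda>e i. e$i) = PiM UNIV (\<lambda>_. NN s2)"
proof -
  interpret N: prob_space "NN s2" unfolding NN_def using s2 by (auto intro: prob_space_normal_density)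
  interpret P: product_sigma_finite "\<lambda>_::'n. NN s2" by standard
  have sN[simp]: "sets (NN s2) = sets borel" by (simp add: NN_def)
  have meas: "(\<lambda>e i. e$i) \<in> measurable (gauss_noise s2) (PiM UNIV (\<lambda>_::'n. NN s2))"
    by (rule measurable_PiM_single') (auto simp: gauss_noise_def measurable_cong_sets[OF refl sN] NN_def)
  show ?thesis
  proof (rule P.PiM_eqI)
    show "sets (distr (gauss_noise s2) (PiM UNIV (\<lambda>_::'n::finite. NN s2)) (\<lambda>e i. e$i)) = sets (PiM UNIV (\<lambda>_::'n::finite. NN s2))" by simp
  next
    fix A :: "'n \<Rightarrow> real set" assume A: "\<And>i. i \<in> UNIV \<Longrightarrow> A i \<in> sets (NN s2)"
    then have Ab[measurable]: "A i \<in> sets borel" for i by simp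
    have pre: "(\<lambda>e i. e$i) -` PiE UNIV A \<inter> space (gauss_noise s2) = {e. \<forall>i. e$i \<in> A i}"
      by (auto simp: gauss_noise_def PiE_def)
    have "emeasure (distr (gauss_noise s2) (PiM UNIV (\<lambda>_::'n::finite. NN s2)) (\<lambda>e i. e$i)) (PiE UNIV A)
        = emeasure (gauss_noise s2) {e. \<forall>i. e$i \<in> A i}"
      using meas A by (subst emeasure_distr) (auto simp: pre sets_PiM_I_finite)
    also have "\<dots> = (\<integral>\<^sup>+e. (\<Prod>i\<in>UNIV. ennreal (normal_density 0 (sqrt s2) (e$i)) * indicator (A i) (e$i)) \<partial>lborel)"
      unfolding gauss_noise_def
      apply (subst emeasure_density)
      subgoal by measurable
      subgoal by measurable
      apply (rule nn_integral_cong)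
      apply (simp add: prod.distrib prod_ennreal indicator_def)
      done
    also have "\<dots> = (\<Prod>i\<in>UNIV. \<integral>\<^sup>+t. ennreal (normal_density 0 (sqrt s2) t) * indicator (A i) t \<partial>lborel)"
      by (rule nn_integral_lborel_prod_vec) measurable
    also have "\<dots> = (\<Prod>i\<in>UNIV. emeasure (NN s2) (A i))"
      unfolding NN_def by (simp add: emeasure_density)
    finally show "emeasure (distr (gauss_noise s2) (PiM UNIV (\<lambda>_::'n::finite. NN s2)) (\<lambda>e i. e$i)) (PiE UNIV A) = (\<Prod>i\<in>UNIV. emeasure (NN s2) (A i))" .
  qed simp
qed

lemma gauss_sum_prob:
  fixes x :: "real^'n::finite"
  assumes s2: "s2 > 0" and x: "x \<noteq> 0"
  shows "measure (PiM UNIV (\<lambda>_::'n. NN s2)) {f \<in> space (PiM UNIV (\<lambda>_::'n. NN s2)). (\<Sum>i\<in>UNIV. x$i * f i)\<^sup>2 \<le> s2 * (x \<bullet> x)}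
     = measure std_normal {z. z\<^sup>2 \<le> 1}"
proof -
  let ?P = "PiM UNIV (\<lambda>_::'n. NN s2)"
  have pN: "prob_space (NN s2)" unfolding NN_def using s2 by (auto intro: prob_space_normal_density)
  interpret P: prob_space ?P by (rule prob_space_PiM) (use pN in auto)
  have sN[simp]: "sets (NN s2) = sets borel" by (simp add: NN_def)
  have spN[simp]: "space (NN s2) = UNIV" by (simp add: NN_def)
  have mc[measurable]: "(\<lambda>f. f i) \<in> borel_measurable ?P" for i
    using measurable_component_singleton[of i UNIV "\<lambda>_. NN s2"]
    by (simp add: measurable_cong_sets[OF refl sN])
  have distr_i: "distr ?P lborel (\<lambda>f. f i) = NN s2" for i
  proof -
    have "distr ?P lborel (\<lambda>f. f i) = distr ?P (NN s2) (\<lambda>f. f i)"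
      by (rule distr_cong) auto
    also have "\<dots> = NN s2" by (rule distr_PiM_component) (use pN in auto)
    finally show ?thesis .
  qed
  have comp: "distributed ?P lborel (\<lambda>f. f i) (normal_density 0 (sqrt s2))" for i
    unfolding distributed_def using distr_i[of i] mc[of i] by (simp add: NN_def)
  have indep: "P.indep_vars (\<lambda>_. borel) (\<lambda>i f. f i) UNIV"
  proof (subst P.indep_vars_iff_distr_eq_PiM)
    show "distr ?P (PiM UNIV (\<lambda>_. borel)) (\<lambda>f. \<lambda>i\<in>UNIV. f i) = PiM UNIV (\<lambda>i. distr ?P borel (\<lambda>f. f i))"
    proof -
      have "distr ?P (PiM UNIV (\<lambda>_. borel)) (\<lambda>f. \<lambda>i\<in>UNIV. f i) = distr ?P ?P (\<lambda>f. f)"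
        by (rule distr_cong) (auto simp: space_PiM intro!: sets_PiM_cong)
      also have "\<dots> = ?P" by simp
      also have "\<dots> = PiM UNIV (\<lambda>i. distr ?P borel (\<lambda>f. f i))"
      proof (rule PiM_cong)
        fix i show "NN s2 = distr ?P borel (\<lambda>f. f i)"
          using distr_i[of i] by (metis distr_cong sets_lborel)
      qed auto
      finally show ?thesis .
    qed
  qed auto
  define I where "I = {i. x$i \<noteq> 0}"
  have I: "finite I" "I \<noteq> {}" using x by (auto simp: I_def vec_eq_iff)
  define \<sigma> where "\<sigma> i = \<bar>x$i\<bar> * sqrt s2" for i
  have indepI: "P.indep_vars (\<lambda>_. borel) (\<lambda>i f. x$i * f i) I"
    by (rule P.indep_vars_compose2[OF P.indep_vars_subset[OF indep]]) auto
  have compI: "distributed ?P lborel (\<lambda>f. x$i * f i) (normal_density 0 (\<sigma> i))" if "i \<in> I" for i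
    using P.normal_density_affine[OF comp[of i], of "x$i" 0] that s2 by (simp add: I_def \<sigma>_def)
  have sumd: "distributed ?P lborel (\<lambda>f. \<Sum>i\<in>I. x$i * f i) (normal_density (\<Sum>i\<in>I. 0) (sqrt (\<Sum>i\<in>I. (\<sigma> i)\<^sup>2)))"
    by (rule P.sum_indep_normal[OF I indepI]) (use s2 compI in \<open>auto simp: \<sigma>_def I_def\<close>)
  define \<tau> where "\<tau> = sqrt (s2 * (x \<bullet> x))"
  have xx: "x \<bullet> x > 0" using x by simp
  have tau: "sqrt (\<Sum>i\<in>I. (\<sigma> i)\<^sup>2) = \<tau>"
  proof -
    have sq: "(\<sigma> i)\<^sup>2 = s2 * (x$i * x$i)" for i
      using s2 by (simp add: \<sigma>_def power_mult_distrib, simp add: power2_eq_square)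
    have "(\<Sum>i\<in>I. (\<sigma> i)\<^sup>2) = (\<Sum>i\<in>UNIV. s2 * (x$i * x$i))"
      unfolding sq by (rule sum.mono_neutral_left) (auto simp: I_def \<sigma>_def power2_eq_square s2 algebra_simps)
    also have "\<dots> = s2 * (x \<bullet> x)" by (simp add: inner_vec_def sum_distrib_left)
    finally show ?thesis by (simp add: \<tau>_def)
  qed
  have taupos: "\<tau> > 0" using s2 xx by (simp add: \<tau>_def)
  have sumUI: "(\<Sum>i\<in>UNIV. x$i * f i) = (\<Sum>i\<in>I. x$i * f i)" for f
    by (rule sum.mono_neutral_right) (auto simp: I_def)
  have std: "distributed ?P lborel (\<lambda>f. ((\<Sum>i\<in>I. x$i * f i) - 0) / \<tau>) std_normal_density"
    using P.normal_standard_normal_convert[OF taupos] sumd tau by simp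
  let ?Z = "\<lambda>f. ((\<Sum>i\<in>I. x$i * f i) - 0) / \<tau>"
  have set_eq: "{f \<in> space ?P. (\<Sum>i\<in>UNIV. x$i * f i)\<^sup>2 \<le> s2 * (x \<bullet> x)} = ?Z -` {z. z\<^sup>2 \<le> 1} \<inter> space ?P"
  proof -
    have "(a)\<^sup>2 \<le> s2 * (x \<bullet> x) \<longleftrightarrow> (a / \<tau>)\<^sup>2 \<le> 1" for a
      using taupos s2 xx by (simp add: power_divide \<tau>_def)
    then show ?thesis by (auto simp: sumUI)
  qed
  have Zm: "?Z \<in> measurable ?P lborel" using std by (simp add: distributed_def)
  have "measure ?P (?Z -` {z. z\<^sup>2 \<le> 1} \<inter> space ?P) = measure (distr ?P lborel ?Z) {z. z\<^sup>2 \<le> 1}"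
    by (rule measure_distr[symmetric]) (use Zm in auto)
  also have "\<dots> = measure std_normal {z. z\<^sup>2 \<le> 1}"
    using std by (simp add: distributed_def std_normal_def)
  finally show ?thesis using set_eq by simp
qed

theorem proposition2:
  fixes X :: "real^'p^'n" and \<beta> :: "real^'p" and s2 :: real
    and ghat :: "real^'n \<Rightarrow> real^'p" and j :: 'p
  assumes s2_pos: "s2 > 0"
    and cols_nonzero: "\<And>k. column k X \<noteq> 0"
    and cols_orth: "\<And>k l. k \<noteq> l \<Longrightarrow> column k X \<bullet> column l X = 0"
    and ghat_nonneg: "\<And>Y k. ghat Y $ k \<ge> 0"
    and ghat_max: "\<And>Y \<gamma>. (\<forall>k. \<gamma> $ k \<ge> 0) \<Longrightarrow> loglik X Y s2 \<gamma> \<le> loglik X Y s2 (ghat Y)"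
    and ghat_char: "\<And>Y k. coord_char X Y s2 (ghat Y) k"
    and beta_j: "\<beta> $ j = 0"
  shows "measure (gauss_noise s2) {e. ghat (X *v \<beta> + e) $ j = 0}
         = measure std_normal {z. z\<^sup>2 \<le> 1}"
proof -
  define x where "x = column j X"
  let ?P = "PiM UNIV (\<lambda>_::'n. NN s2)"
  let ?T = "\<lambda>(e::real^'n) i. e$i"
  let ?Q = "\<lambda>f::'n \<Rightarrow> real. (\<Sum>i\<in>UNIV. x$i * f i)\<^sup>2 \<le> s2 * (x \<bullet> x)"
  have sN[simp]: "sets (NN s2) = sets borel" by (simp add: NN_def)
  have spN[simp]: "space (NN s2) = UNIV" by (simp add: NN_def)
  have mc[measurable]: "(\<lambda>f. f i) \<in> borel_measurable ?P" for i
    using measurable_component_singleton[of i UNIV "\<lambda>_. NN s2"]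
    by (simp add: measurable_cong_sets[OF refl sN])
  have Qm: "{f \<in> space ?P. ?Q f} \<in> sets ?P" by measurable
  have meas: "?T \<in> measurable (gauss_noise s2) ?P"
    by (rule measurable_PiM_single') (auto simp: gauss_noise_def measurable_cong_sets[OF refl sN] NN_def)
  have xb: "x \<bullet> (X *v \<beta>) = 0"
  proof -
    have "x \<bullet> (X *v \<beta>) = (\<Sum>k\<in>UNIV. \<beta>$k * (x \<bullet> column k X))"
      by (simp add: matrix_mult_sum inner_sum_right scalar_mult_eq_scaleR)
    also have "\<dots> = 0"
      by (rule sum.neutral) (metis x_def beta_j cols_orth mult_zero_left mult_zero_right)
    finally show ?thesis .
  qed
  have "{e. ghat (X *v \<beta> + e) $ j = 0} = {e. (x \<bullet> e)\<^sup>2 \<le> s2 * (x \<bullet> x)}"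
    using char_zero_iff[OF s2_pos cols_nonzero cols_orth ghat_nonneg ghat_char] xb
    by (auto simp: x_def inner_add_right)
  also have "\<dots> = ?T -` {f \<in> space ?P. ?Q f} \<inter> space (gauss_noise s2)"
    by (auto simp: gauss_noise_def space_PiM inner_vec_def)
  finally have "measure (gauss_noise s2) {e. ghat (X *v \<beta> + e) $ j = 0}
      = measure (distr (gauss_noise s2) ?P ?T) {f \<in> space ?P. ?Q f}"
    using measure_distr[OF meas Qm] by simp
  also have "\<dots> = measure ?P {f \<in> space ?P. ?Q f}"
    by (subst gauss_noise_proj[OF s2_pos]) (rule refl)
  also have "\<dots> = measure std_normal {z. z\<^sup>2 \<le> 1}"
    by (rule gauss_sum_prob[OF s2_pos]) (simp add: x_def cols_nonzero)
  finally show ?thesis .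
qed

end
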